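(* Let $G=(V,E,L)$ be a graph with loops, let $\{i,i\}\in L^+$, and let $M\subseteq N(i)$ with $i\in M$; set $d:=|M|$. Consider the variables $z_p$, $p\in V\cup E\cup L$, together with auxiliary variables $z_S$ for all $S\subseteq M$ with $|S|\ge2$ and $S\notin E$. Then the set of all such vectors satisfying $$z_{ii}\ \ge\sum_{J\subseteq M:\, i\in J}\frac{\big(\ell_d(J,M\setminus J)\big)^2}{\ell_{d-1}(J\setminus\{i\},M\setminus J)},\qquad \ell_d(J,M\setminus J)\ge 0\quad\forall J\subseteq M$$ is a closed convex set. Moreover, its projection onto the space of variables $z_p$, $p\in V\cup E\cup L$, contains $\mathrm{QP}(G)$ (i.e., it is a convex relaxation of $\mathrm{QP}(G)$).
   Context: A graph with loops is $G=(V,E,L)$: $V$ finite node set, $E$ a set of unordered pairs of distinct nodes, $L$ a set of loops $\{i,i\}$ partitioned as $L=L^-\cup L^+$ (minus/plus loops). $\mathrm{QP}(G):=\mathrm{conv}\{z\in\mathbb{R}^{V\cup E\cup L}: z_{ii}\ge z_i^2\ \forall\{i,i\}\in L^+,\ z_{ii}\le z_i^2\ \forall \{i,i\}\in L^-,\ z_{ij}=z_iz_j\ \forall \{i,j\}\in E,\ z_i\in[0,1]\ \forall i\in V\}$. For a plus loop $\{i,i\}$, $N(i):=\{j\in V:\{i,j\}\in E\cup L\}$ (so $i\in N(i)$). For $S\subseteq M$: $z_\emptyset:=1$, $z_{\{k\}}:=z_k$, and for $|S|\ge2$, $z_S$ is the edge variable if $S\in E$ and the auxiliary variable otherwise (the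 loop variable $z_{ii}$ is distinct). For disjoint $J_1,J_2$ with $|J_1\cup J_2|=d$, $\ell_d(J_1,J_2):=\sum_{t\subseteq J_2}(-1)^{|t|}z_{J_1\cup t}$. Each $u^2/v$ denotes the closed perspective: $u^2/v$ if $v>0$, $0$ if $u=v=0$, $+\infty$ if $u\neq0,v=0$. *)

theory Defs
  imports "HOL-Analysis.Analysis" "HOL-Library.Function_Algebras"
begin

text \<open>Points of the variable spaces are functions from variable indices to reals,
  equipped with the (product) topology from Function_Topology.\<close>

instantiation "fun" :: (type, real_vector) real_vector
begin
definition scaleR_fun :: "real \<Rightarrow> ('a \<Rightarrow> 'b) \<Rightarrow> 'a \<Rightarrow> 'b"
  where "scaleR_fun r f = (\<lambda>x. r *\<^sub>R f x)"
instance
  by standard (auto simp: scaleR_fun_def fun_eq_iff scaleR_add_right scaleR_add_left)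
end

text \<open>Variable indices: node variables z_i, variables z_S indexed by a set S of
  nodes with at least two elements (edge variables if S is an edge, auxiliary
  variables otherwise), and loop variables z_ii.\<close>
datatype 'a var = Node 'a | Pair "'a set" | Loop 'a

text \<open>A graph with loops (V,E,L): E is a set of 2-element subsets of V;
  loops {i,i} are represented by their node i; Lm / Lp are the minus / plus loops.\<close>
definition graph_with_loops :: "'a set \<Rightarrow> 'a set set \<Rightarrow> 'a set \<Rightarrow> 'a set \<Rightarrow> bool" where
  "graph_with_loops V E Lm Lp \<longleftrightarrow> finite V \<and>
     (\<forall>e\<in>E. \<exists>u v. u \<in> V \<and> v \<in> V \<and> u \<noteq> v \<and> e = {u, v}) \<and>
     Lm \<subseteq> V \<and> Lp \<subseteq> V \<and> Lm \<inter> Lp = {}"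

definition base_idx :: "'a set \<Rightarrow> 'a set set \<Rightarrow> 'a set \<Rightarrow> 'a set \<Rightarrow> 'a var set" where
  "base_idx V E Lm Lp = Node ` V \<union> Pair ` E \<union> Loop ` (Lm \<union> Lp)"

definition ext_idx :: "'a set \<Rightarrow> 'a set set \<Rightarrow> 'a set \<Rightarrow> 'a set \<Rightarrow> 'a set \<Rightarrow> 'a var set" where
  "ext_idx V E Lm Lp M = base_idx V E Lm Lp \<union> Pair ` {S. S \<subseteq> M \<and> 2 \<le> card S \<and> S \<notin> E}"

definition nbhd :: "'a set set \<Rightarrow> 'a set \<Rightarrow> 'a set \<Rightarrow> 'a \<Rightarrow> 'a set" where
  "nbhd E Lm Lp i = {j. {i, j} \<in> E \<or> (j = i \<and> i \<in> Lm \<union> Lp)}"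

definition QP :: "'a set \<Rightarrow> 'a set set \<Rightarrow> 'a set \<Rightarrow> 'a set \<Rightarrow> ('a var \<Rightarrow> real) set" where
  "QP V E Lm Lp = convex hull {z. (\<forall>p. p \<notin> base_idx V E Lm Lp \<longrightarrow> z p = 0) \<and>
      (\<forall>i\<in>Lp. z (Loop i) \<ge> (z (Node i))\<^sup>2) \<and>
      (\<forall>i\<in>Lm. z (Loop i) \<le> (z (Node i))\<^sup>2) \<and>
      (\<forall>u v. {u, v} \<in> E \<longrightarrow> z (Pair {u, v}) = z (Node u) * z (Node v)) \<and>
      (\<forall>i\<in>V. 0 \<le> z (Node i) \<and> z (Node i) \<le> 1)}"

definition zS :: "('a var \<Rightarrow> real) \<Rightarrow> 'a set \<Rightarrow> real" where
  "zS z S = (if S = {} then 1 else if card S = 1 then z (Node (the_elem S)) else z (Pair S))"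

text \<open>\<ell>_d(J1,J2) = \<Sum>_{t \<subseteq> J2} (-1)^|t| z_{J1 \<union> t}  (d = |J1 \<union> J2| is implicit).\<close>
definition ell :: "('a var \<Rightarrow> real) \<Rightarrow> 'a set \<Rightarrow> 'a set \<Rightarrow> real" where
  "ell z J1 J2 = (\<Sum>t\<in>Pow J2. (-1) ^ card t * zS z (J1 \<union> t))"

text \<open>Closed perspective u^2/v (extended real valued; +\<infinity> for v < 0, which
  cannot occur on the feasible set anyway).\<close>
definition persp :: "real \<Rightarrow> real \<Rightarrow> ereal" where
  "persp u v = (if v > 0 then ereal (u\<^sup>2 / v) else if u = 0 \<and> v = 0 then 0 else \<infinity>)"

definition relax_set :: "'a set \<Rightarrow> 'a set set \<Rightarrow> 'a set \<Rightarrow> 'a set \<Rightarrow> 'a set \<Rightarrow> 'a \<Rightarrow> ('a var \<Rightarrow> real) set" where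
  "relax_set V E Lm Lp M i = {z. (\<forall>p. p \<notin> ext_idx V E Lm Lp M \<longrightarrow> z p = 0) \<and>
      ereal (z (Loop i)) \<ge> (\<Sum>J\<in>{J. J \<subseteq> M \<and> i \<in> J}. persp (ell z J (M - J)) (ell z (J - {i}) (M - J))) \<and>
      (\<forall>J. J \<subseteq> M \<longrightarrow> ell z J (M - J) \<ge> 0)}"

definition proj_base :: "'a set \<Rightarrow> 'a set set \<Rightarrow> 'a set \<Rightarrow> 'a set \<Rightarrow> ('a var \<Rightarrow> real) \<Rightarrow> 'a var \<Rightarrow> real" where
  "proj_base V E Lm Lp z = (\<lambda>p. if p \<in> base_idx V E Lm Lp then z p else 0)"

end

theory Submission
  imports Defs
begin


lemma finite_M:
  assumes "graph_with_loops V E Lm Lp" "i \<in> Lp" "M \<subseteq> nbhd E Lm Lp i"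
  shows "M \<subseteq> V" "finite M"
proof -
  show "M \<subseteq> V"
  proof
    fix j assume "j \<in> M"
    then have "{i,j} \<in> E \<or> j = i" using assms(3) by (auto simp: nbhd_def)
    then show "j \<in> V" using assms(1,2) unfolding graph_with_loops_def
      by (metis doubleton_eq_iff in_mono)
  qed
  then show "finite M" using assms(1) finite_subset unfolding graph_with_loops_def by blast
qed

lemma ell_split:
  assumes "finite B" "i \<notin> B"
  shows "ell z A (insert i B) = ell z A B - ell z (insert i A) B"
proof -
  have inj: "inj_on (insert i) (Pow B)" using assms(2) unfolding inj_on_def
    by (metis Pow_iff insert_ident subset_iff)
  have disj: "Pow B \<inter> insert i ` Pow B = {}" using assms(2) by auto
  have "ell z A (insert i B) = (\<Sum>t\<in>Pow B. (-1)^card t * zS z (A \<union> t))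
      + (\<Sum>t\<in>insert i ` Pow B. (-1)^card t * zS z (A \<union> t))"
    unfolding ell_def Pow_insert using assms(1) disj by (intro sum.union_disjoint) auto
  also have "(\<Sum>t\<in>insert i ` Pow B. (-1)^card t * zS z (A \<union> t))
      = (\<Sum>t\<in>Pow B. (-1)^card (insert i t) * zS z (A \<union> insert i t))"
    using inj by (simp add: sum.reindex)
  also have "\<dots> = (\<Sum>t\<in>Pow B. - ((-1)^card t * zS z (insert i A \<union> t)))"
  proof (rule sum.cong)
    fix t assume "t \<in> Pow B"
    then have "finite t" "i \<notin> t" using assms finite_subset by auto
    then show "(-1)^card (insert i t) * zS z (A \<union> insert i t) = - ((-1)^card t * zS z (insert i A \<union> t))"
      by simp
  qed simp
  finally show ?thesis by (simp add: ell_def sum_negf)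
qed

definition aff :: "(('a var \<Rightarrow> real) \<Rightarrow> real) \<Rightarrow> bool" where
  "aff f \<longleftrightarrow> (\<forall>x y a b. a + b = 1 \<longrightarrow> f (a *\<^sub>R x + b *\<^sub>R y) = a * f x + b * f y)"

lemma aff_coord: "aff (\<lambda>z. z p)"
  by (simp add: aff_def scaleR_fun_def)

lemma aff_const: "aff (\<lambda>z. c)"
  unfolding aff_def by (metis distrib_right mult_1)

lemma aff_zS: "aff (\<lambda>z. zS z S)"
  unfolding zS_def by (cases "S = {}"; cases "card S = 1") (simp_all add: aff_coord aff_const)

lemma aff_sum: "(\<And>t. t \<in> T \<Longrightarrow> aff (f t)) \<Longrightarrow> aff (\<lambda>z. \<Sum>t\<in>T. f t z)"
  unfolding aff_def by (simp add: sum.distrib sum_distrib_left)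

lemma aff_lin: "aff f \<Longrightarrow> aff g \<Longrightarrow> aff (\<lambda>z. c * f z + d * g z)"
  unfolding aff_def by (simp add: algebra_simps)

lemma aff_ell: "aff (\<lambda>z. ell z A B)"
  unfolding ell_def
  by (rule aff_sum, rule aff_lin[where d=0 and g="\<lambda>z. 0", simplified], rule aff_zS, rule aff_const)

lemma convex_aff: "aff f \<Longrightarrow> aff g \<Longrightarrow> convex {z. f z \<le> g z}"
  unfolding convex_def aff_def
  by (auto intro!: add_mono mult_left_mono)

lemma cont_zS [continuous_intros]: "continuous_on S (\<lambda>z. zS z T)"
  unfolding zS_def
  by (cases "T = {}"; cases "card T = 1")
    (simp_all add: continuous_on_subset[OF continuous_on_product_coordinates])

lemma cont_ell [continuous_intros]: "continuous_on S (\<lambda>z. ell z A B)"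
  unfolding ell_def by (intro continuous_intros)

lemma persp_eq: "0 \<le> u \<Longrightarrow> u \<le> v \<Longrightarrow> persp u v = ereal (u^2/v)"
  by (auto simp: persp_def)

lemma quad_le:
  fixes u v t :: real
  assumes "0 \<le> u" "u \<le> v" shows "2*t*u - t^2* v \<le> u^2/v"
proof (cases "v = 0")
  case True then show ?thesis using assms by simp
next
  case False
  then have v: "v > 0" using assms by simp
  have "(u - t* v)^2 / v \<ge> 0" using v by simp
  moreover have "(u - t* v)^2 / v = u^2/v - 2*t*u + t^2* v"
    using v by (simp add: field_simps power2_eq_square)
  ultimately show ?thesis by simp
qed

lemma quad_eq:
  fixes u v :: real shows "2*(u/v)*u - (u/v)^2* v = u^2/v"
  by (cases "v = 0") (simp_all add: field_simps power2_eq_square)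



lemma relax_char:
  assumes fin: "finite M" and iM: "i \<in> M"
  shows "relax_set V E Lm Lp M i =
    (\<Inter>p\<in>- ext_idx V E Lm Lp M. {z. z p = 0}) \<inter> (\<Inter>J\<in>Pow M. {z. 0 \<le> ell z J (M - J)}) \<inter>
    (\<Inter>t. {z. (\<Sum>J\<in>{J. J \<subseteq> M \<and> i \<in> J}. 2 * t J * ell z J (M - J) - (t J)^2 * ell z (J - {i}) (M - J)) \<le> z (Loop i)})"
    (is "?L = ?R")
proof -
  let ?JJ = "{J. J \<subseteq> M \<and> i \<in> J}"
  have finJJ: "finite ?JJ" using fin by simp
  have key: "(ereal (z (Loop i)) \<ge> (\<Sum>J\<in>?JJ. persp (ell z J (M - J)) (ell z (J - {i}) (M - J))))
     \<longleftrightarrow> (\<forall>t. (\<Sum>J\<in>?JJ. 2 * t J * ell z J (M - J) - (t J)^2 * ell z (J - {i}) (M - J)) \<le> z (Loop i))"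
    if nn: "\<forall>J. J \<subseteq> M \<longrightarrow> 0 \<le> ell z J (M - J)" for z
  proof -
    have uv: "0 \<le> ell z J (M - J) \<and> ell z J (M - J) \<le> ell z (J - {i}) (M - J)" if J: "J \<in> ?JJ" for J
    proof -
      have 1: "M - (J - {i}) = insert i (M - J)" using J by auto
      have 2: "insert i (J - {i}) = J" using J by auto
      have "ell z (J - {i}) (M - (J - {i})) = ell z (J - {i}) (M - J) - ell z J (M - J)"
        unfolding 1 using ell_split[of "M - J" i z "J - {i}"] fin J 2 by auto
      moreover have "0 \<le> ell z (J - {i}) (M - (J - {i}))" using nn J by (metis (no_types, lifting) Diff_subset mem_Collect_eq order_trans)
      moreover have "0 \<le> ell z J (M - J)" using nn J by auto
      ultimately show ?thesis by simp
    qed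
    have "(\<Sum>J\<in>?JJ. persp (ell z J (M - J)) (ell z (J - {i}) (M - J)))
        = ereal (\<Sum>J\<in>?JJ. (ell z J (M - J))^2 / ell z (J - {i}) (M - J))"
      using uv by (simp add: persp_eq)
    then have "(ereal (z (Loop i)) \<ge> (\<Sum>J\<in>?JJ. persp (ell z J (M - J)) (ell z (J - {i}) (M - J))))
       \<longleftrightarrow> (\<Sum>J\<in>?JJ. (ell z J (M - J))^2 / ell z (J - {i}) (M - J)) \<le> z (Loop i)" by simp
    also have "\<dots> \<longleftrightarrow> (\<forall>t. (\<Sum>J\<in>?JJ. 2 * t J * ell z J (M - J) - (t J)^2 * ell z (J - {i}) (M - J)) \<le> z (Loop i))"
    proof
      assume h: "(\<Sum>J\<in>?JJ. (ell z J (M - J))^2 / ell z (J - {i}) (M - J)) \<le> z (Loop i)"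
      show "\<forall>t. (\<Sum>J\<in>?JJ. 2 * t J * ell z J (M - J) - (t J)^2 * ell z (J - {i}) (M - J)) \<le> z (Loop i)"
      proof
        fix t :: "'a set \<Rightarrow> real"
        have "(\<Sum>J\<in>?JJ. 2 * t J * ell z J (M - J) - (t J)^2 * ell z (J - {i}) (M - J))
           \<le> (\<Sum>J\<in>?JJ. (ell z J (M - J))^2 / ell z (J - {i}) (M - J))"
          using uv quad_le by (intro sum_mono) blast
        then show "(\<Sum>J\<in>?JJ. 2 * t J * ell z J (M - J) - (t J)^2 * ell z (J - {i}) (M - J)) \<le> z (Loop i)"
          using h by linarith
      qed
    next
      assume h: "\<forall>t. (\<Sum>J\<in>?JJ. 2 * t J * ell z J (M - J) - (t J)^2 * ell z (J - {i}) (M - J)) \<le> z (Loop i)"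
      from h[rule_format, of "\<lambda>J. ell z J (M - J) / ell z (J - {i}) (M - J)"]
      show "(\<Sum>J\<in>?JJ. (ell z J (M - J))^2 / ell z (J - {i}) (M - J)) \<le> z (Loop i)"
        by (simp only: quad_eq)
    qed
    finally show ?thesis .
  qed
  show ?thesis
  proof (rule set_eqI)
    fix z :: "'a var \<Rightarrow> real"
    have A: "z \<in> (\<Inter>p\<in>- ext_idx V E Lm Lp M. {z. z p = 0}) \<longleftrightarrow> (\<forall>p. p \<notin> ext_idx V E Lm Lp M \<longrightarrow> z p = 0)"
      by auto
    have B: "z \<in> (\<Inter>J\<in>Pow M. {z. 0 \<le> ell z J (M - J)}) \<longleftrightarrow> (\<forall>J. J \<subseteq> M \<longrightarrow> 0 \<le> ell z J (M - J))"
      by auto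
    show "z \<in> ?L \<longleftrightarrow> z \<in> ?R"
      unfolding relax_set_def mem_Collect_eq Int_iff A B using key[of z] by auto
  qed
qed



lemma prod_neg: "(\<Prod>k\<in>t. - X k) = (-1::real)^card t * prod X t"
  by (induction t rule: infinite_finite_induct) auto

lemma incl_excl:
  fixes X :: "'b \<Rightarrow> real"
  assumes "finite B"
  shows "(\<Sum>t\<in>Pow B. (-1)^card t * prod X t) = (\<Prod>k\<in>B. 1 - X k)"
proof -
  have "(\<Prod>k\<in>B. - X k + 1) = (\<Sum>t\<in>Pow B. (\<Prod>k\<in>t. - X k) * (\<Prod>k\<in>B - t. 1))"
    by (rule prod_add[OF assms])
  then show ?thesis by (simp add: prod_neg)
qed

lemma ell_prod:
  fixes X :: "'b \<Rightarrow> real"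
  assumes fin: "finite M" and zp: "\<And>S. S \<subseteq> M \<Longrightarrow> zS z S = prod X S"
    and J: "J \<subseteq> M" and B: "B \<subseteq> M" and d: "J \<inter> B = {}"
  shows "ell z J B = prod X J * (\<Prod>k\<in>B. 1 - X k)"
proof -
  have fJ: "finite J" and fB: "finite B" using J B fin finite_subset by auto
  have "ell z J B = (\<Sum>t\<in>Pow B. (-1)^card t * (prod X J * prod X t))"
    unfolding ell_def
  proof (rule sum.cong)
    fix t assume t: "t \<in> Pow B"
    then have "J \<union> t \<subseteq> M" "finite t" "J \<inter> t = {}" using J B d fB finite_subset by auto
    then show "(-1)^card t * zS z (J \<union> t) = (-1)^card t * (prod X J * prod X t)"
      using zp fJ by (simp add: prod.union_disjoint)
  qed simp
  also have "\<dots> = prod X J * (\<Sum>t\<in>Pow B. (-1)^card t * prod X t)"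
    by (simp add: sum_distrib_left algebra_simps)
  finally show ?thesis using incl_excl[OF fB] by simp
qed

lemma persp_mult:
  assumes "0 \<le> Q" shows "persp (a * Q) Q = ereal (a^2 * Q)"
  using assms by (auto simp: persp_def power2_eq_square)

lemma feasible_in:
  assumes g: "graph_with_loops V E Lm Lp" and iLp: "i \<in> Lp" and fin: "finite M" and MV: "M \<subseteq> V"
    and iM: "i \<in> M"
    and x: "x \<in> {z. (\<forall>p. p \<notin> base_idx V E Lm Lp \<longrightarrow> z p = 0) \<and>
      (\<forall>i\<in>Lp. z (Loop i) \<ge> (z (Node i))\<^sup>2) \<and>
      (\<forall>i\<in>Lm. z (Loop i) \<le> (z (Node i))\<^sup>2) \<and>
      (\<forall>u v. {u, v} \<in> E \<longrightarrow> z (Pair {u, v}) = z (Node u) * z (Node v)) \<and>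
      (\<forall>i\<in>V. 0 \<le> z (Node i) \<and> z (Node i) \<le> 1)}"
  shows "x \<in> proj_base V E Lm Lp ` relax_set V E Lm Lp M i"
proof -
  define X where "X = (\<lambda>k. x (Node k))"
  define z where "z = (\<lambda>p. case p of Pair S \<Rightarrow> (if S \<in> E then x p else if S \<subseteq> M \<and> 2 \<le> card S then (\<Prod>k\<in>S. X k) else 0) | _ \<Rightarrow> x p)"
  have x0: "\<And>p. p \<notin> base_idx V E Lm Lp \<Longrightarrow> x p = 0" using x by auto
  have xE: "\<And>u v. {u, v} \<in> E \<Longrightarrow> x (Pair {u, v}) = X u * X v" using x by (auto simp: X_def)
  have X01: "\<And>k. k \<in> M \<Longrightarrow> 0 \<le> X k \<and> X k \<le> 1" using x MV by (auto simp: X_def)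
  have xL: "x (Loop i) \<ge> (X i)^2" using x iLp by (auto simp: X_def)
  have proj: "proj_base V E Lm Lp z = x"
  proof
    fix p show "proj_base V E Lm Lp z p = x p"
      by (cases p) (auto simp: proj_base_def z_def x0 base_idx_def)
  qed
  have zero: "\<forall>p. p \<notin> ext_idx V E Lm Lp M \<longrightarrow> z p = 0"
  proof (intro allI impI)
    fix p assume p: "p \<notin> ext_idx V E Lm Lp M"
    then have "p \<notin> base_idx V E Lm Lp" by (auto simp: ext_idx_def)
    then show "z p = 0" using p by (cases p) (auto simp: z_def x0 ext_idx_def base_idx_def)
  qed
  have zp: "zS z S = prod X S" if S: "S \<subseteq> M" for S
  proof -
    have fS: "finite S" using S fin finite_subset by auto
    have "card S = 0 \<or> card S = 1 \<or> card S \<ge> 2" by arith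
    then consider "S = {}" | "card S = 1" | "card S \<ge> 2" using fS by auto
    then show ?thesis
    proof cases
      case 1 then show ?thesis by (simp add: zS_def)
    next
      case 2
      then obtain k where "S = {k}" using card_1_singletonE by blast
      then show ?thesis by (simp add: zS_def z_def X_def)
    next
      case 3
      then have ne: "S \<noteq> {}" "card S \<noteq> 1" by auto
      show ?thesis
      proof (cases "S \<in> E")
        case True
        then obtain u v where uv: "u \<noteq> v" "S = {u, v}" using g unfolding graph_with_loops_def by blast
        then show ?thesis using xE[of u v] True ne by (simp add: zS_def z_def)
      next
        case False
        then show ?thesis using ne S 3 by (simp add: zS_def z_def)
      qed
    qed
  qed
  let ?JJ = "{J. J \<subseteq> M \<and> i \<in> J}"
  let ?Q = "\<lambda>J. prod X (J - {i}) * (\<Prod>k\<in>M - J. 1 - X k)"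
  have nn: "\<forall>J. J \<subseteq> M \<longrightarrow> ell z J (M - J) \<ge> 0"
  proof (intro allI impI)
    fix J assume J: "J \<subseteq> M"
    then have "ell z J (M - J) = prod X J * (\<Prod>k\<in>M - J. 1 - X k)" using ell_prod[OF fin zp] by auto
    also have "\<dots> \<ge> 0" using J X01 by (intro mult_nonneg_nonneg prod_nonneg) auto
    finally show "ell z J (M - J) \<ge> 0" .
  qed
  have eachJ: "persp (ell z J (M - J)) (ell z (J - {i}) (M - J)) = ereal ((X i)^2 * ?Q J)"
    if J: "J \<in> ?JJ" for J
  proof -
    have "prod X J = X i * prod X (J - {i})" using J fin finite_subset
      by (metis (no_types, lifting) mem_Collect_eq prod.remove)
    then have e1: "ell z J (M - J) = X i * ?Q J"
      using ell_prod[OF fin zp, of J "M - J"] J by auto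
    have e2: "ell z (J - {i}) (M - J) = ?Q J"
      using ell_prod[OF fin zp, of "J - {i}" "M - J"] J by auto
    have "0 \<le> ?Q J" using J X01 by (intro mult_nonneg_nonneg prod_nonneg) auto
    then show ?thesis unfolding e1 e2 by (rule persp_mult)
  qed
  have JJ: "?JJ = insert i ` Pow (M - {i})"
  proof (rule set_eqI iffI)+
    fix J assume J: "J \<in> ?JJ"
    then have "J = insert i (J - {i})" "J - {i} \<in> Pow (M - {i})" by auto
    then show "J \<in> insert i ` Pow (M - {i})" by (rule image_eqI)
  next
    fix J assume "J \<in> insert i ` Pow (M - {i})"
    then show "J \<in> ?JJ" using iM by auto
  qed
  have inj: "inj_on (insert i) (Pow (M - {i}))"
  proof (rule inj_onI)
    fix s t assume s: "s \<in> Pow (M - {i})" and t: "t \<in> Pow (M - {i})" and e: "insert i s = insert i t"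
    from s t have "i \<notin> s" "i \<notin> t" by auto
    then show "s = t" using e insert_ident[of i s t] by simp
  qed
  have "(\<Sum>J\<in>?JJ. ?Q J) = (\<Sum>J\<in>Pow (M - {i}). ?Q (insert i J))"
    unfolding JJ using inj by (simp add: sum.reindex)
  also have "\<dots> = (\<Sum>J\<in>Pow (M - {i}). prod X J * (\<Prod>k\<in>(M - {i}) - J. 1 - X k))"
  proof (rule sum.cong)
    fix J assume "J \<in> Pow (M - {i})"
    then have "insert i J - {i} = J" "M - insert i J = (M - {i}) - J" by auto
    then show "?Q (insert i J) = prod X J * (\<Prod>k\<in>(M - {i}) - J. 1 - X k)" by simp
  qed simp
  also have "\<dots> = (\<Prod>k\<in>M - {i}. X k + (1 - X k))"
    by (rule prod_add[symmetric]) (simp add: fin)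
  also have "\<dots> = 1" by simp
  finally have sumQ: "(\<Sum>J\<in>?JJ. ?Q J) = 1" .
  have "(\<Sum>J\<in>?JJ. persp (ell z J (M - J)) (ell z (J - {i}) (M - J))) = (\<Sum>J\<in>?JJ. ereal ((X i)^2 * ?Q J))"
    using eachJ by (rule sum.cong[OF refl])
  also have "\<dots> = ereal ((X i)^2)" by (simp add: sum_distrib_left[symmetric] sumQ)
  also have "\<dots> \<le> ereal (z (Loop i))" using xL by (simp add: z_def)
  finally have main: "ereal (z (Loop i)) \<ge> (\<Sum>J\<in>?JJ. persp (ell z J (M - J)) (ell z (J - {i}) (M - J)))" .
  have "z \<in> relax_set V E Lm Lp M i" unfolding relax_set_def using zero main nn by blast
  then show ?thesis using proj by (metis image_eqI)
qed

theorem proposition5: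
  fixes V :: "'a set" and E :: "'a set set" and Lm Lp M :: "'a set" and i :: 'a
  assumes "graph_with_loops V E Lm Lp"
    and "i \<in> Lp"
    and "M \<subseteq> nbhd E Lm Lp i"
    and "i \<in> M"
  shows "closed (relax_set V E Lm Lp M i) \<and> convex (relax_set V E Lm Lp M i) \<and>
         QP V E Lm Lp \<subseteq> proj_base V E Lm Lp ` relax_set V E Lm Lp M i"
proof (intro conjI)
  have fin: "finite M" and MV: "M \<subseteq> V" using finite_M[OF assms(1-3)] by auto
  note char = relax_char[OF fin assms(4), of V E Lm Lp]
  show "closed (relax_set V E Lm Lp M i)"
    unfolding char
  proof (intro closed_Int closed_INT ballI)
    fix p :: "'a var"
    show "closed {z :: 'a var \<Rightarrow> real. z p = 0}"
      by (rule closed_Collect_eq[OF continuous_on_product_coordinates continuous_on_const])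
  next
    fix J
    show "closed {z. 0 \<le> ell z J (M - J)}"
      by (rule closed_Collect_le[OF continuous_on_const cont_ell])
  next
    fix t :: "'a set \<Rightarrow> real"
    have c: "continuous_on UNIV (\<lambda>z. \<Sum>J\<in>{J. J \<subseteq> M \<and> i \<in> J}. 2 * t J * ell z J (M - J) - (t J)^2 * ell z (J - {i}) (M - J))"
      by (intro continuous_on_sum continuous_on_diff continuous_on_mult continuous_on_const cont_ell)
    show "closed {z. (\<Sum>J\<in>{J. J \<subseteq> M \<and> i \<in> J}. 2 * t J * ell z J (M - J) - (t J)^2 * ell z (J - {i}) (M - J)) \<le> z (Loop i)}"
      by (rule closed_Collect_le[OF c continuous_on_product_coordinates])
  qed
  show cvx: "convex (relax_set V E Lm Lp M i)"
    unfolding char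
  proof (intro convex_Int convex_INT)
    fix p
    show "convex {z :: 'a var \<Rightarrow> real. z p = 0}"
      unfolding convex_def by (simp add: scaleR_fun_def)
  next
    fix J
    show "convex {z. 0 \<le> ell z J (M - J)}" by (intro convex_aff aff_const aff_ell)
  next
    fix t :: "'a set \<Rightarrow> real"
    show "convex {z. (\<Sum>J\<in>{J. J \<subseteq> M \<and> i \<in> J}. 2 * t J * ell z J (M - J) - (t J)^2 * ell z (J - {i}) (M - J)) \<le> z (Loop i)}"
    proof (intro convex_aff aff_coord aff_sum)
      fix J
      have "aff (\<lambda>z. (2 * t J) * ell z J (M - J) + (- ((t J)^2)) * ell z (J - {i}) (M - J))"
        by (intro aff_lin aff_ell)
      then show "aff (\<lambda>z. 2 * t J * ell z J (M - J) - (t J)^2 * ell z (J - {i}) (M - J))"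
        by simp
    qed
  qed
  have lin: "linear (proj_base V E Lm Lp)"
    by (rule linearI) (auto simp: proj_base_def scaleR_fun_def fun_eq_iff)
  show "QP V E Lm Lp \<subseteq> proj_base V E Lm Lp ` relax_set V E Lm Lp M i"
    unfolding QP_def
  proof (rule hull_minimal)
    show "convex (proj_base V E Lm Lp ` relax_set V E Lm Lp M i)"
      by (rule convex_linear_image[OF lin cvx])
  next
    show "{z. (\<forall>p. p \<notin> base_idx V E Lm Lp \<longrightarrow> z p = 0) \<and>
      (\<forall>i\<in>Lp. z (Loop i) \<ge> (z (Node i))\<^sup>2) \<and>
      (\<forall>i\<in>Lm. z (Loop i) \<le> (z (Node i))\<^sup>2) \<and>
      (\<forall>u v. {u, v} \<in> E \<longrightarrow> z (Pair {u, v}) = z (Node u) * z (Node v)) \<and>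
      (\<forall>i\<in>V. 0 \<le> z (Node i) \<and> z (Node i) \<le> 1)} \<subseteq> proj_base V E Lm Lp ` relax_set V E Lm Lp M i"
      by (intro subsetI feasible_in[OF assms(1,2) fin MV assms(4)])
  qed
qed

end
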